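(* Let $n$ be a prime with $n\equiv 1$ or $5\pmod 6$. Then there exists a one-factorization $\mathcal{T}$ of $K_{2n}$ on the vertex set $\{0,1,\dots,2n-1\}$ such that: (1) if $n\equiv 5\pmod 6$, then $\mathcal{T}=\{\mathcal{T}_{i,j}: 1\le i\le \frac{2n-1}{3},\ 1\le j\le 3\}$, where $\mathcal{T}_{i,1}\cup\mathcal{T}_{i,2}\cup\mathcal{T}_{i,3}=\mathcal{A}_i\cup\mathcal{B}_i\cup\mathcal{D}_{i-1}$ for $1\le i\le\frac{n-1}{2}$, and $\mathcal{T}_{i,1}=\mathcal{D}_{3i-n-2}$, $\mathcal{T}_{i,2}=\mathcal{D}_{3i-n-1}$, $\mathcal{T}_{i,3}=\mathcal{D}_{3i-n}$ for $\frac{n+1}{2}\le i\le\frac{2n-1}{3}$; (2) if $n\equiv 1\pmod 6$, then $\mathcal{T}=\{\mathcal{T}_{i,j}: 1\le i\le\frac{n-1}{2},\ 1\le j\le 3\}\cup\{\mathcal{D}_i:\frac{n-1}{2}\le i\le n-1\}$, where $\mathcal{T}_{i,1}\cup\mathcal{T}_{i,2}\cup\mathcal{T}_{i,3}=\mathcal{A}_i\cup\mathcal{B}_i\cup\mathcal{D}_{i-1}$ for $1\le i\le \frac{n-1}{2}$.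
   Context: For $1\le i\le \frac{n-1}{2}$: $\mathcal{A}_i=\{\{x,y\}: x,y\in\{0,\dots,n-1\},\ y-x\equiv i \pmod n\}$ and $\mathcal{B}_i=\{\{x,y\}: x,y\in\{n,\dots,2n-1\},\ y-x\equiv i\pmod n\}$. For $0\le i\le n-1$: $\mathcal{D}_i=\{\{x,y\}: 0\le x\le n-1,\ n\le y\le 2n-1,\ y-x\equiv i\pmod n\}$. A one-factor of $K_{2n}$ is a perfect matching; a one-factorization is a partition of the edge set of $K_{2n}$ into $2n-1$ one-factors. *)

theory Defs
  imports "HOL-Computational_Algebra.Primes"
begin

definition Kedges :: "nat \<Rightarrow> nat set set" where
  "Kedges n = {{x, y} | x y. x < 2*n \<and> y < 2*n \<and> x \<noteq> y}"

definition one_factor :: "nat \<Rightarrow> nat set set \<Rightarrow> bool" where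
  "one_factor n M \<longleftrightarrow> M \<subseteq> Kedges n \<and> (\<forall>v < 2*n. \<exists>!e. e \<in> M \<and> v \<in> e)"

definition one_factorization :: "nat \<Rightarrow> nat set set set \<Rightarrow> bool" where
  "one_factorization n F \<longleftrightarrow>
     (\<forall>M \<in> F. one_factor n M) \<and> pairwise disjnt F \<and> \<Union>F = Kedges n \<and> card F = 2*n - 1"

definition A_cls :: "nat \<Rightarrow> nat \<Rightarrow> nat set set" where
  "A_cls n i = {{x, y} | x y. x < n \<and> y < n \<and> (int y - int x) mod int n = int i mod int n}"

definition B_cls :: "nat \<Rightarrow> nat \<Rightarrow> nat set set" where
  "B_cls n i = {{x, y} | x y. n \<le> x \<and> x < 2*n \<and> n \<le> y \<and> y < 2*n \<and>
                            (int y - int x) mod int n = int i mod int n}"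

definition D_cls :: "nat \<Rightarrow> nat \<Rightarrow> nat set set" where
  "D_cls n i = {{x, y} | x y. x < n \<and> n \<le> y \<and> y < 2*n \<and>
                            (int y - int x) mod int n = int i mod int n}"

end

theory Submission
  imports Defs
begin


lemma gen:
  fixes P :: "'c \<Rightarrow> nat \<Rightarrow> nat" and col :: "nat \<Rightarrow> nat \<Rightarrow> 'c" and C :: "'c set"
  assumes fin: "finite C" and cardC: "card C = 2*n - 1"
  and sym: "\<And>x y. x < 2*n \<Longrightarrow> y < 2*n \<Longrightarrow> col x y = col y x"
  and R1: "\<And>c v. c \<in> C \<Longrightarrow> v < 2*n \<Longrightarrow> P c v < 2*n \<and> P c v \<noteq> v \<and> col v (P c v) = c"
  and R2: "\<And>x y. x < 2*n \<Longrightarrow> y < 2*n \<Longrightarrow> x \<noteq> y \<Longrightarrow> col x y \<in> C \<and> P (col x y) x = y"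
  and n0: "n \<ge> 1"
  shows "one_factorization n ((\<lambda>c. {{v, P c v} | v. v < 2*n}) ` C)"
proof -
  define M where "M c = {{v, P c v} | v. v < 2*n}" for c
  have inv: "P c (P c v) = v" if "c \<in> C" "v < 2*n" for c v
  proof -
    have "P c v < 2*n" "P c v \<noteq> v" "col v (P c v) = c" using R1 that by auto
    moreover have "col (P c v) v = c" using sym[of "P c v" v] that \<open>P c v < 2*n\<close> \<open>col v (P c v) = c\<close> by simp
    ultimately show ?thesis using R2[of "P c v" v] that by metis
  qed
  have same: "c = d" if "c \<in> C" "d \<in> C" "u < 2*n" "v < 2*n" "{u, P c u} = {v, P d v}" for c d u v
  proof -
    have cu: "col u (P c u) = c" and dv: "col v (P d v) = d" using R1 that by auto
    from that(5) have "(u = v \<and> P c u = P d v) \<or> (u = P d v \<and> P c u = v)"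
      by (auto simp: doubleton_eq_iff)
    thus ?thesis
    proof
      assume "u = v \<and> P c u = P d v" thus ?thesis using cu dv by metis
    next
      assume "u = P d v \<and> P c u = v" thus ?thesis using cu dv sym[of u v] that(3,4) by metis
    qed
  qed
  have of: "one_factor n (M c)" if c: "c \<in> C" for c
    unfolding one_factor_def
  proof
    show "M c \<subseteq> Kedges n"
    proof
      fix e assume "e \<in> M c"
      then obtain v where v: "v < 2*n" "e = {v, P c v}" unfolding M_def by blast
      have "P c v < 2*n" "v \<noteq> P c v" using R1[OF c v(1)] by auto
      thus "e \<in> Kedges n" unfolding Kedges_def using v by blast
    qed
    show "\<forall>v<2 * n. \<exists>!e. e \<in> M c \<and> v \<in> e"
    proof (intro allI impI)
      fix v assume v: "v < 2*n"
      show "\<exists>!e. e \<in> M c \<and> v \<in> e"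
      proof
        show "{v, P c v} \<in> M c \<and> v \<in> {v, P c v}" unfolding M_def using v by blast
        fix e assume e: "e \<in> M c \<and> v \<in> e"
        then obtain u where u: "u < 2*n" "e = {u, P c u}" unfolding M_def by blast
        hence "v = u \<or> v = P c u" using e by auto
        thus "e = {v, P c v}"
        proof
          assume "v = u" thus ?thesis using u by simp
        next
          assume "v = P c u" hence "P c v = u" using inv c u by simp
          thus ?thesis using u \<open>v = P c u\<close> by auto
        qed
      qed
    qed
  qed
  have inj: "inj_on M C"
  proof (rule inj_onI)
    fix c d assume cd: "c \<in> C" "d \<in> C" "M c = M d"
    have "{0, P c 0} \<in> M c" using n0 unfolding M_def by auto
    hence "{0, P c 0} \<in> M d" using cd by simp
    then obtain v where "v < 2*n" "{0, P c 0} = {v, P d v}" unfolding M_def by blast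
    thus "c = d" using same[of c d 0 v] cd n0 by simp
  qed
  have "one_factorization n (M ` C)"
    unfolding one_factorization_def
  proof (intro conjI)
    show "\<forall>M'\<in>M ` C. one_factor n M'" using of by blast
    show "pairwise disjnt (M ` C)"
    proof (rule pairwiseI)
      fix A B assume "A \<in> M ` C" "B \<in> M ` C" "A \<noteq> B"
      then obtain c d where cd: "c \<in> C" "d \<in> C" "A = M c" "B = M d" by blast
      show "disjnt A B" unfolding disjnt_def
      proof (rule ccontr)
        assume "A \<inter> B \<noteq> {}"
        then obtain e where "e \<in> M c" "e \<in> M d" using cd by blast
        obtain u where u: "u < 2*n" "e = {u, P c u}" using \<open>e \<in> M c\<close> unfolding M_def by blast
        obtain v where v: "v < 2*n" "e = {v, P d v}" using \<open>e \<in> M d\<close> unfolding M_def by blast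
        have "c = d" using same[OF cd(1,2) u(1) v(1)] u(2) v(2) by simp
        thus False using cd \<open>A \<noteq> B\<close> by simp
      qed
    qed
    show "\<Union> (M ` C) = Kedges n"
    proof
      show "\<Union> (M ` C) \<subseteq> Kedges n"
      proof
        fix e assume "e \<in> \<Union> (M ` C)"
        then obtain c where "c \<in> C" "e \<in> M c" by blast
        thus "e \<in> Kedges n" using of[of c] unfolding one_factor_def by blast
      qed
      show "Kedges n \<subseteq> \<Union> (M ` C)"
      proof
        fix e assume "e \<in> Kedges n"
        then obtain x y where xy: "e = {x,y}" "x < 2*n" "y < 2*n" "x \<noteq> y"
          unfolding Kedges_def by blast
        hence "col x y \<in> C" "P (col x y) x = y" using R2 by auto
        hence "e = {x, P (col x y) x}" using xy by simp
        hence "e \<in> M (col x y)" unfolding M_def using xy(2) by blast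
        thus "e \<in> \<Union> (M ` C)" using \<open>col x y \<in> C\<close> by blast
      qed
    qed
    show "card (M ` C) = 2 * n - 1" using card_image[OF inj] cardC by simp
  qed
  thus ?thesis unfolding M_def by simp
qed

locale pf =
  fixes n :: nat
  assumes pn: "prime n" and on: "odd n"
begin

lemma n_ge3: "n \<ge> 3"
proof -
  have "n \<ge> 2" using pn prime_ge_2_nat by blast
  moreover have "n \<noteq> 2" using on by auto
  ultimately show ?thesis by linarith
qed

definition h where "h = (n - 1) div 2"
lemma n_h: "n = 2*h+1" using on n_ge3 unfolding h_def by presburger
lemma h_ge1: "h \<ge> 1" using n_h n_ge3 by linarith

definition sh :: "nat \<Rightarrow> int \<Rightarrow> nat" where "sh x a = nat ((int x + a) mod int n)"

lemma npos: "int n > 0" using n_ge3 by simp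

lemma int_sh: "int (sh x a) = (int x + a) mod int n"
  unfolding sh_def using npos by simp

lemma sh_lt: "sh x a < n"
  using int_sh[of x a] npos by (metis of_nat_less_iff pos_mod_bound)

lemma sh_sh: "sh (sh x a) b = sh x (a + b)"
proof -
  have "int (sh (sh x a) b) = int (sh x (a+b))"
    unfolding int_sh by (simp add: mod_add_left_eq add.assoc)
  thus ?thesis by simp
qed

lemma sh_eq: "y < n \<Longrightarrow> (sh x a = y) \<longleftrightarrow> (int y - int x) mod int n = a mod int n"
proof -
  assume y: "y < n"
  have "(sh x a = y) \<longleftrightarrow> (int x + a) mod int n = int y mod int n"
    using y by (metis int_sh of_nat_eq_iff of_nat_less_iff zmod_int mod_less)
  also have "\<dots> \<longleftrightarrow> int n dvd (int x + a) - int y" by (rule mod_eq_dvd_iff)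
  also have "\<dots> \<longleftrightarrow> int n dvd (int y - int x) - a"
    by (metis dvd_minus_iff minus_diff_eq diff_diff_eq2 add.commute diff_diff_eq)
  also have "\<dots> \<longleftrightarrow> (int y - int x) mod int n = a mod int n" by (rule mod_eq_dvd_iff[symmetric])
  finally show ?thesis .
qed

lemma sh_0: "x < n \<Longrightarrow> sh x 0 = x" using sh_eq by simp

definition dA :: "nat \<Rightarrow> nat \<Rightarrow> nat" where "dA x y = nat ((int y - int x) mod int n)"

lemma int_dA: "int (dA x y) = (int y - int x) mod int n"
  unfolding dA_def using npos by simp

lemma dA_lt: "dA x y < n"
  using int_dA[of x y] npos by (metis of_nat_less_iff pos_mod_bound)

lemma dA_iff: "k < n \<Longrightarrow> dA x y = k \<longleftrightarrow> (int y - int x) mod int n = int k"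
  using int_dA by (metis of_nat_eq_iff)

lemma sh_iff_dA: "y < n \<Longrightarrow> k < n \<Longrightarrow> (sh x (int k) = y) \<longleftrightarrow> dA x y = k"
  using sh_eq dA_iff by (simp add: mod_less)

lemma dA_sum: "x < n \<Longrightarrow> y < n \<Longrightarrow> x \<noteq> y \<Longrightarrow> dA x y + dA y x = n \<and> dA x y \<ge> 1"
proof -
  assume a: "x < n" "y < n" "x \<noteq> y"
  have ne: "(int y - int x) mod int n \<noteq> 0"
  proof
    assume "(int y - int x) mod int n = 0"
    then have "int n dvd int y - int x" by auto
    then obtain q where q: "int y - int x = int n * q" by auto
    have "int n * q < int n * 1" using a unfolding q[symmetric] by simp
    hence q1: "q < 1" using npos mult_less_cancel_left_pos[of "int n" q 1] by simp
    have "int n * (-1) < int n * q" using a unfolding q[symmetric] by simp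
    hence "-1 < q" using npos mult_less_cancel_left_pos[of "int n" "-1" q] by simp
    with q1 have "q = 0" by simp
    thus False using q a by simp
  qed
  have "(int x - int y) mod int n = int n - (int y - int x) mod int n"
    using ne by (metis minus_diff_eq zmod_zminus1_not_zero zmod_zminus1_eq_if)
  hence "int (dA y x) = int n - int (dA x y)" using int_dA by simp
  moreover have "int (dA x y) \<noteq> 0" using ne int_dA by simp
  ultimately show ?thesis by linarith
qed

definition winv :: "nat \<Rightarrow> int" where "winv i = (SOME u. (int i * u) mod int n = 1)"

lemma winv: "1 \<le> i \<Longrightarrow> i < n \<Longrightarrow> (int i * winv i) mod int n = 1"
proof -
  assume i: "1 \<le> i" "i < n"
  have "\<not> n dvd i" using i by (auto dest: dvd_imp_le)
  hence "coprime n i" using pn prime_imp_coprime by blast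
  hence g: "gcd (int i) (int n) = 1" by (simp add: coprime_commute gcd_int_def)
  obtain u v where "u * int i + v * int n = 1" using bezout_int[of "int i" "int n"] g by auto
  hence "(int i * u) mod int n = 1 mod int n"
    by (metis mod_mult_self1 mult.commute)
  also have "\<dots> = 1" using n_ge3 by simp
  finally have "\<exists>u. (int i * u) mod int n = 1" by blast
  thus ?thesis unfolding winv_def by (rule someI_ex)
qed


definition pt :: "nat \<Rightarrow> nat \<Rightarrow> nat" where "pt i x = nat ((int x * winv i) mod int n)"
definition pb :: "nat \<Rightarrow> nat \<Rightarrow> nat" where "pb i y = pt i (sh y (1 - int i))"

lemma pt_lt: "pt i x < n"
  unfolding pt_def using npos
  by (metis nat_less_iff pos_mod_bound pos_mod_sign)

lemma pb_lt: "pb i x < n" unfolding pb_def by (rule pt_lt)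

lemma pt_sh: "1 \<le> i \<Longrightarrow> i < n \<Longrightarrow> pt i (sh x (m * int i)) = sh (pt i x) m"
proof -
  assume i: "1 \<le> i" "i < n"
  have w: "(int i * winv i) mod int n = 1" using winv i by blast
  obtain q where q: "int i * winv i = 1 + int n * q"
    using w by (metis mod_mult_div_eq add.commute mult.commute)
  have "int (pt i (sh x (m * int i))) = ((int x + m * int i) mod int n * winv i) mod int n"
    unfolding pt_def using int_sh npos by simp
  also have "\<dots> = ((int x + m * int i) * winv i) mod int n" by (simp add: mod_mult_left_eq)
  also have "(int x + m * int i) * winv i = int x * winv i + m * (int i * winv i)"
    by (simp add: algebra_simps)
  also have "\<dots> = int x * winv i + m + int n * (m * q)"
    unfolding q by (simp add: algebra_simps)
  also have "(int x * winv i + m + int n * (m * q)) mod int n = (int x * winv i + m) mod int n"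
    by simp
  also have "\<dots> = ((int x * winv i) mod int n + m) mod int n" by (simp add: mod_add_left_eq)
  also have "\<dots> = int (sh (pt i x) m)"
    unfolding int_sh pt_def using npos by simp
  finally show ?thesis by simp
qed

lemma pb_sh: "1 \<le> i \<Longrightarrow> i < n \<Longrightarrow> pb i (sh y (m * int i)) = sh (pb i y) m"
proof -
  assume i: "1 \<le> i" "i < n"
  have "pb i (sh y (m * int i)) = pt i (sh y (m * int i + (1 - int i)))"
    unfolding pb_def sh_sh by simp
  also have "\<dots> = pt i (sh (sh y (1 - int i)) (m * int i))"
    unfolding sh_sh by (simp add: add.commute)
  also have "\<dots> = sh (pb i y) m" unfolding pb_def using pt_sh i by blast
  finally show ?thesis .
qed

lemma pb_rung: "x < n \<Longrightarrow> pb i (sh x (int i - 1)) = pt i x"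
proof -
  assume x: "x < n"
  have "pb i (sh x (int i - 1)) = pt i (sh x (int i - 1 + (1 - int i)))"
    unfolding pb_def sh_sh by simp
  also have "int i - 1 + (1 - int i) = 0" by simp
  finally show ?thesis using sh_0 x by simp
qed

lemma sh_p1: "k < n \<Longrightarrow> sh k 1 = (if k = n - 1 then 0 else k + 1)"
proof (cases "k = n - 1")
  case True
  assume k: "k < n"
  have "(int 0 - int k) mod int n = 1 mod int n"
    using True n_ge3 by (simp add: of_nat_diff mod_diff_right_eq[symmetric])
  hence "sh k 1 = 0" using sh_eq[of 0 k 1] npos by simp
  thus ?thesis using True by simp
next
  case False
  assume k: "k < n"
  have "sh k 1 = k + 1" using sh_eq[of "k+1" k 1] False k by simp
  thus ?thesis using False by simp
qed


lemma sh_m1: "k < n \<Longrightarrow> sh k (-1) = (if k = 0 then n - 1 else k - 1)"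
proof (cases "k = 0")
  case True
  assume k: "k < n"
  have "(int (n-1) - int k) mod int n = (-1) mod int n"
    using True n_ge3 by (simp add: of_nat_diff)
  hence "sh k (-1) = n - 1" using sh_eq[of "n-1" k "-1"] n_ge3 by simp
  thus ?thesis using True by simp
next
  case False
  assume k: "k < n"
  have "sh k (-1) = k - 1" using sh_eq[of "k-1" k "-1"] False k by (simp add: of_nat_diff)
  thus ?thesis using False by simp
qed

definition move :: "nat \<Rightarrow> nat \<Rightarrow> int" where
  "move j k = (if j = 1 then (if k = n - 1 then 0 else if even k then 1 else -1)
     else if j = 2 then (if k = 0 then 0 else if odd k then 1 else -1)
     else (if k = 0 then -1 else if k = n - 1 then 1 else 0))"

definition colA :: "nat \<Rightarrow> nat" where
  "colA k = (if k = n - 1 then 3 else if even k then 1 else 2)"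
definition colR :: "nat \<Rightarrow> nat" where
  "colR k = (if k = 0 then 2 else if k = n - 1 then 1 else 3)"

lemma on': "even (n - 1)" using on n_ge3 by simp

lemma move_colA: "k < n \<Longrightarrow> move (colA k) k = 1"
  using on' n_ge3 unfolding move_def colA_def by auto

lemma move_colR: "k < n \<Longrightarrow> move (colR k) k = 0"
  using on' n_ge3 unfolding move_def colR_def by auto

lemma colA_range: "colA k \<in> {1,2,3}" unfolding colA_def by auto
lemma colR_range: "colR k \<in> {1,2,3}" unfolding colR_def by auto

lemma move1: "j \<in> {1,2,3} \<Longrightarrow> k < n \<Longrightarrow> move j k = 1 \<Longrightarrow> colA k = j"
  using on' n_ge3 unfolding move_def colA_def by (auto split: if_splits)

lemma move0: "j \<in> {1,2,3} \<Longrightarrow> k < n \<Longrightarrow> move j k = 0 \<Longrightarrow> colR k = j"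
  using on' n_ge3 unfolding move_def colR_def by (auto split: if_splits)

lemma move_vals: "move j k = 0 \<or> move j k = 1 \<or> move j k = -1"
  unfolding move_def by auto

lemma move_next: "j \<in> {1,2,3} \<Longrightarrow> k < n \<Longrightarrow> move j k = 1 \<Longrightarrow> move j (sh k 1) = -1"
proof -
  assume j: "j \<in> {1,2,3}" and k: "k < n" and m: "move j k = 1"
  show ?thesis
  proof (cases "k = n - 1")
    case True
    then show ?thesis using j m sh_p1[OF k] n_ge3 on on' unfolding move_def by auto
  next
    case False
    hence s: "sh k 1 = k + 1" using sh_p1[OF k] by simp
    consider "j = 1" | "j = 2" | "j = 3" using j by auto
    then show ?thesis
    proof cases
      case 1
      hence "even k" using m False by (simp add: move_def split: if_splits)
      hence "k + 1 \<noteq> n - 1" "odd (k+1)" using on' by presburger+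
      thus ?thesis using 1 s unfolding move_def by simp
    next
      case 2
      hence "odd k" using m by (simp add: move_def split: if_splits)
      hence "even (k+1)" by simp
      thus ?thesis using 2 s unfolding move_def by simp
    next
      case 3
      thus ?thesis using m False by (simp add: move_def split: if_splits)
    qed
  qed
qed

lemma move_prev: "j \<in> {1,2,3} \<Longrightarrow> k < n \<Longrightarrow> move j k = -1 \<Longrightarrow> move j (sh k (-1)) = 1"
proof -
  assume j: "j \<in> {1,2,3}" and k: "k < n" and m: "move j k = -1"
  show ?thesis
  proof (cases "k = 0")
    case True
    then show ?thesis using j m sh_m1[OF k] n_ge3 on on' unfolding move_def by auto
  next
    case False
    hence s: "sh k (-1) = k - 1" using sh_m1[OF k] by simp
    consider "j = 1" | "j = 2" | "j = 3" using j by auto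
    then show ?thesis
    proof cases
      case 1
      hence "odd k" "k \<noteq> n - 1" using m by (simp_all add: move_def split: if_splits)
      hence "k - 1 \<noteq> n - 1" "even (k - 1)" using k by presburger+
      thus ?thesis using 1 s unfolding move_def by simp
    next
      case 2
      hence "even k" using m False by (simp add: move_def split: if_splits)
      hence "odd (k - 1)" "k - 1 \<noteq> 0" using False by presburger+
      thus ?thesis using 2 s unfolding move_def by simp
    next
      case 3
      thus ?thesis using m False by (simp add: move_def split: if_splits)
    qed
  qed
qed

end


context pf begin

definition ic where "ic x y = min (dA x y) (dA y x)"

definition col :: "nat \<Rightarrow> nat \<Rightarrow> nat \<times> nat" where
 "col x y = (if x < n \<and> y < n then (ic x y, colA (if dA x y = ic x y then pt (ic x y) x else pt (ic x y) y))
   else if n \<le> x \<and> n \<le> y then (ic (x-n) (y-n), colA (if dA (x-n) (y-n) = ic (x-n) (y-n) then pb (ic (x-n) (y-n)) (x-n) else pb (ic (x-n) (y-n)) (y-n)))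
   else (if h \<le> dA (min x y) (max x y - n) then (0, dA (min x y) (max x y - n))
         else (dA (min x y) (max x y - n) + 1, colR (pt (dA (min x y) (max x y - n) + 1) (min x y)))))"

definition P :: "nat \<times> nat \<Rightarrow> nat \<Rightarrow> nat" where
 "P c v = (if fst c = 0 then (if v < n then n + sh v (int (snd c)) else sh (v - n) (- int (snd c)))
   else if v < n then (if move (snd c) (pt (fst c) v) = 0 then n + sh v (int (fst c) - 1) else sh v (move (snd c) (pt (fst c) v) * int (fst c)))
   else (if move (snd c) (pb (fst c) (v-n)) = 0 then sh (v-n) (1 - int (fst c)) else n + sh (v-n) (move (snd c) (pb (fst c) (v-n)) * int (fst c))))"

definition CC where "CC = ({1..h} \<times> {1,2,3}) \<union> ({0} \<times> {h..n-1})"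

lemma P_top: "i \<ge> 1 \<Longrightarrow> x < n \<Longrightarrow> P (i,j) x = (if move j (pt i x) = 0 then n + sh x (int i - 1) else sh x (move j (pt i x) * int i))"
  unfolding P_def by simp
lemma P_bot: "i \<ge> 1 \<Longrightarrow> n \<le> v \<Longrightarrow> P (i,j) v = (if move j (pb i (v-n)) = 0 then sh (v-n) (1 - int i) else n + sh (v-n) (move j (pb i (v-n)) * int i))"
  unfolding P_def by simp
lemma P0_top: "x < n \<Longrightarrow> P (0,k) x = n + sh x (int k)"
  unfolding P_def by simp
lemma P0_bot: "n \<le> v \<Longrightarrow> P (0,k) v = sh (v - n) (- int k)"
  unfolding P_def by simp

lemma col_top: "x < n \<Longrightarrow> y < n \<Longrightarrow> col x y = (ic x y, colA (if dA x y = ic x y then pt (ic x y) x else pt (ic x y) y))"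
  unfolding col_def by simp
lemma col_bot: "n \<le> x \<Longrightarrow> n \<le> y \<Longrightarrow> col x y = (ic (x-n) (y-n), colA (if dA (x-n) (y-n) = ic (x-n) (y-n) then pb (ic (x-n) (y-n)) (x-n) else pb (ic (x-n) (y-n)) (y-n)))"
  unfolding col_def using n_ge3 by simp
lemma col_mix1: "x < n \<Longrightarrow> n \<le> y \<Longrightarrow> col x y = (if h \<le> dA x (y-n) then (0, dA x (y-n)) else (dA x (y-n) + 1, colR (pt (dA x (y-n) + 1) x)))"
  unfolding col_def by (simp add: min_def max_def)
lemma col_mix2: "y < n \<Longrightarrow> n \<le> x \<Longrightarrow> col x y = (if h \<le> dA y (x-n) then (0, dA y (x-n)) else (dA y (x-n) + 1, colR (pt (dA y (x-n) + 1) y)))"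
  unfolding col_def by (simp add: min_def max_def)

lemma ic_props: "x < n \<Longrightarrow> y < n \<Longrightarrow> x \<noteq> y \<Longrightarrow>
   1 \<le> ic x y \<and> ic x y \<le> h \<and> (dA x y = ic x y \<or> dA y x = ic x y) \<and> \<not>(dA x y = ic x y \<and> dA y x = ic x y)"
proof -
  assume a: "x < n" "y < n" "x \<noteq> y"
  have s: "dA x y + dA y x = n" "dA x y \<ge> 1" "dA y x \<ge> 1" using dA_sum a by (metis add.commute)+
  show ?thesis unfolding ic_def using s n_h by (auto simp: min_def; presburger)
qed

lemma ic_eq: "x < n \<Longrightarrow> y < n \<Longrightarrow> x \<noteq> y \<Longrightarrow> 1 \<le> i \<Longrightarrow> i \<le> h \<Longrightarrow>
   ic x y = i \<longleftrightarrow> (dA x y = i \<or> dA y x = i)"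
proof -
  assume a: "x < n" "y < n" "x \<noteq> y" "1 \<le> i" "i \<le> h"
  have s: "dA x y + dA y x = n" using dA_sum a by blast
  show ?thesis unfolding ic_def using s n_h a by (auto simp: min_def)
qed

lemma ic_sym: "ic x y = ic y x" unfolding ic_def by simp

lemma col_sym: "x < 2*n \<Longrightarrow> y < 2*n \<Longrightarrow> col x y = col y x"
proof -
  assume "x < 2*n" "y < 2*n"
  consider "x < n \<and> y < n" | "n \<le> x \<and> n \<le> y" | "x < n \<and> n \<le> y" | "y < n \<and> n \<le> x" by linarith
  then show ?thesis
  proof cases
    case 1
    show ?thesis
    proof (cases "x = y")
      case False
      thus ?thesis using 1 ic_props[of x y] col_top[of x y] col_top[of y x] ic_sym[of x y] by auto
    qed simp
  next
    case 2
    show ?thesis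
    proof (cases "x = y")
      case False
      hence "x - n \<noteq> y - n" using 2 by arith
      moreover have "x - n < n" "y - n < n" using \<open>x < 2*n\<close> \<open>y < 2*n\<close> by auto
      ultimately show ?thesis using 2 ic_props[of "x-n" "y-n"] col_bot[of x y] col_bot[of y x] ic_sym[of "x-n" "y-n"] by auto
    qed simp
  next
    case 3 thus ?thesis using col_mix1 col_mix2 by simp
  next
    case 4 thus ?thesis using col_mix1 col_mix2 by simp
  qed
qed


lemma dA_self: "dA x x = 0" unfolding dA_def by simp

lemma sh_dA: "y < n \<Longrightarrow> sh x (int (dA x y)) = y"
  using sh_iff_dA dA_lt by blast

lemma dA_sh: "k < n \<Longrightarrow> dA x (sh x (int k)) = k"
  using sh_iff_dA sh_lt by blast

lemma sh_neg: "a < n \<Longrightarrow> sh b (- int (dA a b)) = a"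
proof -
  assume a: "a < n"
  have "(- int (dA a b)) mod int n = (- (int b - int a)) mod int n"
    unfolding int_dA by (simp add: mod_minus_eq)
  also have "\<dots> = (int a - int b) mod int n" by simp
  finally show ?thesis using sh_eq[OF a] by simp
qed

lemma sh_neq: "x < n \<Longrightarrow> 1 \<le> k \<Longrightarrow> k < n \<Longrightarrow> sh x (int k) \<noteq> x"
  using dA_sh[of k x] dA_self[of x] by auto

lemma sh_neq2: "x < n \<Longrightarrow> 1 \<le> k \<Longrightarrow> k < n \<Longrightarrow> sh x (- int k) \<noteq> x"
proof
  assume a: "x < n" "1 \<le> k" "k < n" "sh x (- int k) = x"
  have "sh (sh x (- int k)) (int k) = x" unfolding sh_sh using sh_0 a by simp
  thus False using a sh_neq[of x k] by simp
qed

lemma col_C: "x < 2*n \<Longrightarrow> y < 2*n \<Longrightarrow> x \<noteq> y \<Longrightarrow> col x y \<in> CC"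
proof -
  assume a: "x < 2*n" "y < 2*n" "x \<noteq> y"
  consider "x < n \<and> y < n" | "n \<le> x \<and> n \<le> y" | "x < n \<and> n \<le> y" | "y < n \<and> n \<le> x" by linarith
  then show ?thesis
  proof cases
    case 1
    thus ?thesis using ic_props[of x y] a col_top[of x y] colA_range unfolding CC_def by auto
  next
    case 2
    hence "x - n < n" "y - n < n" "x - n \<noteq> y - n" using a by arith+
    thus ?thesis using ic_props[of "x-n" "y-n"] 2 col_bot[of x y] colA_range unfolding CC_def by auto
  next
    case 3
    thus ?thesis using col_mix1[of x y] dA_lt[of x "y-n"] colR_range n_h unfolding CC_def by auto
  next
    case 4
    thus ?thesis using col_mix2[of y x] dA_lt[of y "x-n"] colR_range n_h unfolding CC_def by auto
  qed
qed


lemma R1_top: assumes i: "1 \<le> i" "i \<le> h" and j: "j \<in> {1,2,3}" and x: "x < n"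
  shows "P (i,j) x < 2*n \<and> P (i,j) x \<noteq> x \<and> col x (P (i,j) x) = (i,j)"
proof -
  have iN: "i < n" using i n_h by simp
  define k where "k = pt i x"
  have kn: "k < n" unfolding k_def by (rule pt_lt)
  consider "move j k = 0" | "move j k = 1" | "move j k = -1" using move_vals by blast
  then show ?thesis
  proof cases
    case 1
    define s where "s = sh x (int i - 1)"
    have P: "P (i,j) x = n + s" using P_top[OF i(1) x] 1 unfolding k_def s_def by simp
    have sn: "s < n" unfolding s_def by (rule sh_lt)
    have "int (i - 1) = int i - 1" using i by simp
    hence "dA x s = i - 1" using dA_sh[of "i-1" x] iN unfolding s_def by simp
    hence "col x (n + s) = (i, colR k)" using col_mix1[of x "n+s"] x i unfolding k_def by simp
    moreover have "colR k = j" using move0[OF j kn 1] .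
    ultimately show ?thesis using P sn x by simp
  next
    case 2
    define y where "y = sh x (int i)"
    have P: "P (i,j) x = y" using P_top[OF i(1) x] 2 unfolding k_def y_def by simp
    have yn: "y < n" unfolding y_def by (rule sh_lt)
    have yx: "y \<noteq> x" unfolding y_def using sh_neq x i iN by simp
    have d: "dA x y = i" unfolding y_def using dA_sh iN by simp
    hence ic: "ic x y = i" using ic_eq[OF x yn yx[symmetric] i] by simp
    have "col x y = (i, colA k)" using col_top[OF x yn] ic d unfolding k_def by simp
    moreover have "colA k = j" using move1[OF j kn 2] .
    ultimately show ?thesis using P yn yx by simp
  next
    case 3
    define y where "y = sh x (- int i)"
    have P: "P (i,j) x = y" using P_top[OF i(1) x] 3 unfolding k_def y_def by simp
    have yn: "y < n" unfolding y_def by (rule sh_lt)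
    have yx: "y \<noteq> x" unfolding y_def using sh_neq2 x i iN by simp
    have "sh y (int i) = x" unfolding y_def sh_sh using sh_0 x by simp
    hence d: "dA y x = i" using sh_iff_dA[OF x iN] by simp
    hence ic: "ic x y = i" using ic_eq[OF x yn yx[symmetric] i] by simp
    have nd: "dA x y \<noteq> i" using ic_props[OF x yn yx[symmetric]] ic d by auto
    have "pt i y = sh k (-1)" unfolding y_def k_def using pt_sh[OF i(1) iN, of x "-1"] by simp
    hence "col x y = (i, colA (sh k (-1)))" using col_top[OF x yn] ic nd by simp
    moreover have "colA (sh k (-1)) = j" using move1[OF j sh_lt move_prev[OF j kn 3]] .
    ultimately show ?thesis using P yn yx by simp
  qed
qed


lemma R1_bot: assumes i: "1 \<le> i" "i \<le> h" and j: "j \<in> {1,2,3}" and v: "n \<le> v" "v < 2*n"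
  shows "P (i,j) v < 2*n \<and> P (i,j) v \<noteq> v \<and> col v (P (i,j) v) = (i,j)"
proof -
  have iN: "i < n" using i n_h by simp
  define b where "b = v - n"
  have bn: "b < n" using v unfolding b_def by simp
  have vb: "v = n + b" using v unfolding b_def by simp
  define k where "k = pb i b"
  have kn: "k < n" unfolding k_def by (rule pb_lt)
  consider "move j k = 0" | "move j k = 1" | "move j k = -1" using move_vals by blast
  then show ?thesis
  proof cases
    case 1
    define t where "t = sh b (1 - int i)"
    have P: "P (i,j) v = t" using P_bot[OF i(1) v(1)] 1 unfolding k_def t_def b_def by simp
    have tn: "t < n" unfolding t_def by (rule sh_lt)
    have "int (i - 1) = int i - 1" using i by simp
    hence "sh t (int (i - 1)) = b" unfolding t_def sh_sh using sh_0 bn by simp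
    hence d: "dA t b = i - 1" using sh_iff_dA[OF bn] iN by simp
    have "pt i t = k" unfolding t_def k_def pb_def ..
    hence "col v t = (i, colR k)" using col_mix2[of t v] tn v i d unfolding b_def by simp
    moreover have "colR k = j" using move0[OF j kn 1] .
    ultimately show ?thesis using P tn v by simp
  next
    case 2
    define y where "y = sh b (int i)"
    have P: "P (i,j) v = n + y" using P_bot[OF i(1) v(1)] 2 unfolding k_def y_def b_def by simp
    have yn: "y < n" unfolding y_def by (rule sh_lt)
    have yx: "y \<noteq> b" unfolding y_def using sh_neq bn i iN by simp
    have d: "dA b y = i" unfolding y_def using dA_sh iN by simp
    hence ic: "ic b y = i" using ic_eq[OF bn yn yx[symmetric] i] by simp
    have "col v (n + y) = (i, colA k)" using col_bot[of v "n+y"] v ic d unfolding k_def b_def by simp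
    moreover have "colA k = j" using move1[OF j kn 2] .
    ultimately show ?thesis using P yn yx vb by simp
  next
    case 3
    define y where "y = sh b (- int i)"
    have P: "P (i,j) v = n + y" using P_bot[OF i(1) v(1)] 3 unfolding k_def y_def b_def by simp
    have yn: "y < n" unfolding y_def by (rule sh_lt)
    have yx: "y \<noteq> b" unfolding y_def using sh_neq2 bn i iN by simp
    have "sh y (int i) = b" unfolding y_def sh_sh using sh_0 bn by simp
    hence d: "dA y b = i" using sh_iff_dA[OF bn iN] by simp
    hence ic: "ic b y = i" using ic_eq[OF bn yn yx[symmetric] i] by simp
    have nd: "dA b y \<noteq> i" using ic_props[OF bn yn yx[symmetric]] ic d by auto
    have "pb i y = sh k (-1)" unfolding y_def k_def using pb_sh[OF i(1) iN, of b "-1"] by simp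
    hence "col v (n + y) = (i, colA (sh k (-1)))" using col_bot[of v "n+y"] v ic nd unfolding b_def by simp
    moreover have "colA (sh k (-1)) = j" using move1[OF j sh_lt move_prev[OF j kn 3]] .
    ultimately show ?thesis using P yn yx vb by simp
  qed
qed

lemma R1_0: assumes k: "h \<le> k" "k \<le> n - 1" and v: "v < 2*n"
  shows "P (0,k) v < 2*n \<and> P (0,k) v \<noteq> v \<and> col v (P (0,k) v) = (0,k)"
proof (cases "v < n")
  case True
  have kn: "k < n" using k n_ge3 by simp
  have "dA v (sh v (int k)) = k" using dA_sh kn by simp
  thus ?thesis using P0_top[OF True] col_mix1[of v "n + sh v (int k)"] True k sh_lt[of v "int k"] by simp
next
  case False
  define b where "b = v - n"
  have bn: "b < n" using v False unfolding b_def by simp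
  have kn: "k < n" using k n_ge3 by simp
  define t where "t = sh b (- int k)"
  have tn: "t < n" unfolding t_def by (rule sh_lt)
  have "sh t (int k) = b" unfolding t_def sh_sh using sh_0 bn by simp
  hence d: "dA t b = k" using sh_iff_dA[OF bn kn] by simp
  have P: "P (0,k) v = t" using P0_bot False unfolding t_def b_def by simp
  show ?thesis using P col_mix2[of t v] tn False d k v unfolding b_def by simp
qed


lemma R2_top: assumes x: "x < n" and y: "y < n" and xy: "x \<noteq> y"
  shows "P (col x y) x = y"
proof -
  define i where "i = ic x y"
  have i: "1 \<le> i" "i \<le> h" using ic_props[OF x y xy] unfolding i_def by auto
  have iN: "i < n" using i n_h by simp
  show ?thesis
  proof (cases "dA x y = i")
    case True
    define j where "j = colA (pt i x)"
    have c: "col x y = (i,j)" using col_top[OF x y] True unfolding i_def j_def by simp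
    have m: "move j (pt i x) = 1" unfolding j_def using move_colA pt_lt by blast
    have "P (i,j) x = sh x (int i)" using P_top[OF i(1) x] m by simp
    also have "\<dots> = y" using sh_iff_dA[OF y iN] True by simp
    finally show ?thesis using c by simp
  next
    case False
    hence d: "dA y x = i" using ic_props[OF x y xy] unfolding i_def by auto
    define j where "j = colA (pt i y)"
    have c: "col x y = (i,j)" using col_top[OF x y] False unfolding i_def j_def by simp
    have jr: "j \<in> {1,2,3}" unfolding j_def by (rule colA_range)
    have m: "move j (pt i y) = 1" unfolding j_def using move_colA pt_lt by blast
    have xs: "x = sh y (int i)" using sh_iff_dA[OF x iN, of y] d by metis
    have "pt i x = sh (pt i y) 1" using xs pt_sh[OF i(1) iN, of y 1] by simp
    hence m': "move j (pt i x) = -1" using move_next[OF jr pt_lt m] by simp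
    have "P (i,j) x = sh x (- int i)" using P_top[OF i(1) x] m' by simp
    also have "\<dots> = y" unfolding xs sh_sh using sh_0 y by simp
    finally show ?thesis using c by simp
  qed
qed

lemma R2_bot: assumes x: "n \<le> x" "x < 2*n" and y: "n \<le> y" "y < 2*n" and xy: "x \<noteq> y"
  shows "P (col x y) x = y"
proof -
  define a where "a = x - n"
  define b where "b = y - n"
  have an: "a < n" "x = n + a" using x unfolding a_def by auto
  have bn: "b < n" "y = n + b" using y unfolding b_def by auto
  have ab: "a \<noteq> b" using xy an bn by auto
  define i where "i = ic a b"
  have i: "1 \<le> i" "i \<le> h" using ic_props[OF an(1) bn(1) ab] unfolding i_def by auto
  have iN: "i < n" using i n_h by simp
  show ?thesis
  proof (cases "dA a b = i")
    case True
    define j where "j = colA (pb i a)"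
    have c: "col x y = (i,j)" using col_bot[OF x(1) y(1)] True unfolding i_def j_def a_def b_def by simp
    have m: "move j (pb i a) = 1" unfolding j_def using move_colA pb_lt by blast
    have "P (i,j) x = n + sh a (int i)" using P_bot[OF i(1) x(1)] m unfolding a_def by simp
    also have "\<dots> = y" using sh_iff_dA[OF bn(1) iN] True bn by simp
    finally show ?thesis using c by simp
  next
    case False
    hence d: "dA b a = i" using ic_props[OF an(1) bn(1) ab] unfolding i_def by auto
    define j where "j = colA (pb i b)"
    have c: "col x y = (i,j)" using col_bot[OF x(1) y(1)] False unfolding i_def j_def a_def b_def by simp
    have jr: "j \<in> {1,2,3}" unfolding j_def by (rule colA_range)
    have m: "move j (pb i b) = 1" unfolding j_def using move_colA pb_lt by blast
    have xs: "a = sh b (int i)" using sh_iff_dA[OF an(1) iN, of b] d by metis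
    have "pb i a = sh (pb i b) 1" using xs pb_sh[OF i(1) iN, of b 1] by simp
    hence m': "move j (pb i a) = -1" using move_next[OF jr pb_lt m] by simp
    have "P (i,j) x = n + sh a (- int i)" using P_bot[OF i(1) x(1)] m' unfolding a_def by simp
    also have "\<dots> = y" unfolding xs sh_sh using sh_0 bn by simp
    finally show ?thesis using c by simp
  qed
qed

lemma R2_mix1: assumes x: "x < n" and y: "n \<le> y" "y < 2*n"
  shows "P (col x y) x = y"
proof -
  define b where "b = y - n"
  have bn: "b < n" "y = n + b" using y unfolding b_def by auto
  define m where "m = dA x b"
  show ?thesis
  proof (cases "h \<le> m")
    case True
    have "col x y = (0, m)" using col_mix1[OF x y(1)] True unfolding m_def b_def by simp
    thus ?thesis using P0_top[OF x] sh_dA[OF bn(1)] bn unfolding m_def by simp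
  next
    case False
    define j where "j = colR (pt (m+1) x)"
    have c: "col x y = (m+1, j)" using col_mix1[OF x y(1)] False unfolding m_def b_def j_def by simp
    have mv: "move j (pt (m+1) x) = 0" unfolding j_def using move_colR pt_lt by blast
    have "P (m+1, j) x = n + sh x (int m)" using P_top[of "m+1" x j] x mv by simp
    thus ?thesis using c sh_dA[OF bn(1)] bn unfolding m_def by simp
  qed
qed

lemma R2_mix2: assumes x: "n \<le> x" "x < 2*n" and y: "y < n"
  shows "P (col x y) x = y"
proof -
  define b where "b = x - n"
  have bn: "b < n" "x = n + b" using x unfolding b_def by auto
  define m where "m = dA y b"
  show ?thesis
  proof (cases "h \<le> m")
    case True
    have "col x y = (0, m)" using col_mix2[OF y x(1)] True unfolding m_def b_def by simp
    thus ?thesis using P0_bot[OF x(1)] sh_neg[OF y, of b] unfolding m_def b_def by simp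
  next
    case False
    define j where "j = colR (pt (m+1) y)"
    have c: "col x y = (m+1, j)" using col_mix2[OF y x(1)] False unfolding m_def b_def j_def by simp
    have e: "pb (m+1) b = pt (m+1) y" unfolding pb_def using sh_neg[OF y, of b] unfolding m_def by simp
    have mv: "move j (pb (m+1) b) = 0" unfolding e j_def using move_colR pt_lt by blast
    have "P (m+1, j) x = sh b (- int m)" using P_bot[of "m+1" x j] x mv unfolding b_def by simp
    thus ?thesis using c sh_neg[OF y, of b] unfolding m_def by simp
  qed
qed

lemma R2: "x < 2*n \<Longrightarrow> y < 2*n \<Longrightarrow> x \<noteq> y \<Longrightarrow> col x y \<in> CC \<and> P (col x y) x = y"
  using col_C R2_top R2_bot R2_mix1 R2_mix2 by (metis not_le)

lemma R1: "c \<in> CC \<Longrightarrow> v < 2*n \<Longrightarrow> P c v < 2*n \<and> P c v \<noteq> v \<and> col v (P c v) = c"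
proof -
  assume c: "c \<in> CC" and v: "v < 2*n"
  obtain i j where ij: "c = (i,j)" by force
  show ?thesis
  proof (cases "i = 0")
    case True
    thus ?thesis using c ij R1_0[OF _ _ v] unfolding CC_def by auto
  next
    case False
    hence i: "1 \<le> i" "i \<le> h" "j \<in> {1,2,3}" using c ij unfolding CC_def by auto
    show ?thesis
    proof (cases "v < n")
      case True thus ?thesis using R1_top[OF i True] ij by simp
    next
      case False thus ?thesis using R1_bot[OF i _ v] ij by simp
    qed
  qed
qed


end


context pf begin

lemma imod: "k < n \<Longrightarrow> int k mod int n = int k" by simp

lemma doubleton_in: "{x,y} \<in> {{a,b}|a b. Q a b} \<longleftrightarrow> Q x y \<or> Q y x"
proof
  assume "{x,y} \<in> {{a,b}|a b. Q a b}"
  then obtain a b where ab: "{x,y} = {a,b}" "Q a b" by blast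
  from ab(1) have "(x = a \<and> y = b) \<or> (x = b \<and> y = a)" by (simp add: doubleton_eq_iff)
  thus "Q x y \<or> Q y x" using ab(2) by blast
next
  assume "Q x y \<or> Q y x"
  thus "{x,y} \<in> {{a,b}|a b. Q a b}"
  proof
    assume "Q x y" thus ?thesis by blast
  next
    assume "Q y x"
    moreover have "{x,y} = {y,x}" by (rule insert_commute)
    ultimately show ?thesis by blast
  qed
qed

lemma inA: "k < n \<Longrightarrow> {x,y} \<in> A_cls n k \<longleftrightarrow> x < n \<and> y < n \<and> (dA x y = k \<or> dA y x = k)"
proof -
  assume k: "k < n"
  have e: "\<And>a b. (int b - int a) mod int n = int k mod int n \<longleftrightarrow> dA a b = k"
    using dA_iff[OF k] imod[OF k] by simp
  show ?thesis unfolding A_cls_def doubleton_in e by blast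
qed

lemma diffn: "n \<le> x \<Longrightarrow> n \<le> y \<Longrightarrow> int y - int x = int (y - n) - int (x - n)" by (simp add: of_nat_diff)
lemma diffn1: "n \<le> y \<Longrightarrow> (int y - int x) mod int n = (int (y - n) - int x) mod int n"
proof -
  assume "n \<le> y"
  hence "int y - int x = (int (y - n) - int x) + int n" by simp
  thus ?thesis by (metis mod_add_self2)
qed

lemma inB: "k < n \<Longrightarrow> {x,y} \<in> B_cls n k \<longleftrightarrow> n \<le> x \<and> x < 2*n \<and> n \<le> y \<and> y < 2*n \<and> (dA (x-n) (y-n) = k \<or> dA (y-n) (x-n) = k)"
proof -
  assume k: "k < n"
  have e: "(int b - int a) mod int n = int k mod int n \<longleftrightarrow> dA (a-n) (b-n) = k" if "n \<le> a" "n \<le> b" for a b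
  proof -
    have d: "int b - int a = int (b-n) - int (a-n)" using diffn that by blast
    show ?thesis unfolding d using dA_iff[OF k, of "a-n" "b-n"] imod[OF k] by simp
  qed
  have "{x,y} \<in> B_cls n k \<longleftrightarrow>
     (n \<le> x \<and> x < 2*n \<and> n \<le> y \<and> y < 2*n \<and> (int y - int x) mod int n = int k mod int n) \<or>
     (n \<le> y \<and> y < 2*n \<and> n \<le> x \<and> x < 2*n \<and> (int x - int y) mod int n = int k mod int n)"
    unfolding B_cls_def by (rule doubleton_in)
  also have "\<dots> \<longleftrightarrow> (n \<le> x \<and> x < 2*n \<and> n \<le> y \<and> y < 2*n \<and> dA (x-n) (y-n) = k) \<or>
     (n \<le> y \<and> y < 2*n \<and> n \<le> x \<and> x < 2*n \<and> dA (y-n) (x-n) = k)"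
    using e[of x y] e[of y x] by blast
  finally show ?thesis by blast
qed

lemma inD: "k < n \<Longrightarrow> {x,y} \<in> D_cls n k \<longleftrightarrow> (x < n \<and> n \<le> y \<and> y < 2*n \<and> dA x (y-n) = k) \<or> (y < n \<and> n \<le> x \<and> x < 2*n \<and> dA y (x-n) = k)"
proof -
  assume k: "k < n"
  have e: "(int b - int a) mod int n = int k mod int n \<longleftrightarrow> dA a (b-n) = k" if "n \<le> b" for a b
  proof -
    have d: "(int b - int a) mod int n = (int (b-n) - int a) mod int n" using diffn1 that by blast
    show ?thesis unfolding d using dA_iff[OF k, of a "b-n"] imod[OF k] by simp
  qed
  have "{x,y} \<in> D_cls n k \<longleftrightarrow>
     (x < n \<and> n \<le> y \<and> y < 2*n \<and> (int y - int x) mod int n = int k mod int n) \<or>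
     (y < n \<and> n \<le> x \<and> x < 2*n \<and> (int x - int y) mod int n = int k mod int n)"
    unfolding D_cls_def by (rule doubleton_in)
  also have "\<dots> \<longleftrightarrow> (x < n \<and> n \<le> y \<and> y < 2*n \<and> dA x (y-n) = k) \<or> (y < n \<and> n \<le> x \<and> x < 2*n \<and> dA y (x-n) = k)"
    using e[of y x] e[of x y] by blast
  finally show ?thesis .
qed

lemma A_edge: "1 \<le> i \<Longrightarrow> i < n \<Longrightarrow> e \<in> A_cls n i \<Longrightarrow> \<exists>x y. e = {x,y} \<and> x < 2*n \<and> y < 2*n \<and> x \<noteq> y"
proof -
  assume i: "1 \<le> i" "i < n" and e: "e \<in> A_cls n i"
  then obtain x y where xy: "e = {x,y}" "x < n" "y < n" "(int y - int x) mod int n = int i mod int n"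
    unfolding A_cls_def by blast
  have "x \<noteq> y"
  proof
    assume "x = y" thus False using xy(4) i by simp
  qed
  moreover have "x < 2*n" "y < 2*n" using xy by auto
  ultimately show ?thesis using xy(1) by blast
qed

lemma B_edge: "1 \<le> i \<Longrightarrow> i < n \<Longrightarrow> e \<in> B_cls n i \<Longrightarrow> \<exists>x y. e = {x,y} \<and> x < 2*n \<and> y < 2*n \<and> x \<noteq> y"
proof -
  assume i: "1 \<le> i" "i < n" and e: "e \<in> B_cls n i"
  then obtain x y where xy: "e = {x,y}" "x < 2*n" "y < 2*n" "(int y - int x) mod int n = int i mod int n"
    unfolding B_cls_def by blast
  have "x \<noteq> y"
  proof
    assume "x = y" thus False using xy(4) i by simp
  qed
  thus ?thesis using xy by blast
qed

lemma D_edge: "e \<in> D_cls n k \<Longrightarrow> \<exists>x y. e = {x,y} \<and> x < 2*n \<and> y < 2*n \<and> x \<noteq> y"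
proof -
  assume "e \<in> D_cls n k"
  then obtain x y where xy: "e = {x,y}" "x < n" "n \<le> y" "y < 2*n" unfolding D_cls_def by blast
  have "x \<noteq> y" "x < 2*n" "y < 2*n" using xy by auto
  thus ?thesis using xy(1) by blast
qed

lemma G_edge: "1 \<le> i \<Longrightarrow> i \<le> h \<Longrightarrow> e \<in> A_cls n i \<union> B_cls n i \<union> D_cls n (i - 1) \<Longrightarrow>
   \<exists>x y. e = {x,y} \<and> x < 2*n \<and> y < 2*n \<and> x \<noteq> y"
proof -
  assume i: "1 \<le> i" "i \<le> h" and e: "e \<in> A_cls n i \<union> B_cls n i \<union> D_cls n (i - 1)"
  have iN: "i < n" using i n_h by simp
  from e have "e \<in> A_cls n i \<or> e \<in> B_cls n i \<or> e \<in> D_cls n (i - 1)" by blast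
  thus ?thesis using A_edge[OF i(1) iN] B_edge[OF i(1) iN] D_edge by blast
qed


lemma colfst: assumes x: "x < 2*n" and y: "y < 2*n" and xy: "x \<noteq> y" and i: "1 \<le> i" "i \<le> h"
  shows "fst (col x y) = i \<longleftrightarrow> {x,y} \<in> A_cls n i \<union> B_cls n i \<union> D_cls n (i - 1)"
proof -
  have iN: "i < n" "i - 1 < n" using i n_h by auto
  consider "x < n \<and> y < n" | "n \<le> x \<and> n \<le> y" | "x < n \<and> n \<le> y" | "y < n \<and> n \<le> x" by linarith
  then show ?thesis
  proof cases
    case 1
    have "fst (col x y) = ic x y" using col_top 1 by simp
    moreover have "{x,y} \<notin> B_cls n i" "{x,y} \<notin> D_cls n (i-1)" using inB[OF iN(1)] inD[OF iN(2)] 1 by auto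
    ultimately show ?thesis using inA[OF iN(1)] ic_eq[OF _ _ xy i] 1 by auto
  next
    case 2
    have ab: "x - n < n" "y - n < n" "x - n \<noteq> y - n" using 2 x y xy by arith+
    have "fst (col x y) = ic (x-n) (y-n)" using col_bot 2 by simp
    moreover have "{x,y} \<notin> A_cls n i" "{x,y} \<notin> D_cls n (i-1)" using inA[OF iN(1)] inD[OF iN(2)] 2 by auto
    ultimately show ?thesis using inB[OF iN(1)] ic_eq[OF ab i] 2 x y by auto
  next
    case 3
    have "fst (col x y) = i \<longleftrightarrow> dA x (y-n) = i - 1" using col_mix1[of x y] 3 i by auto
    moreover have "{x,y} \<notin> A_cls n i" "{x,y} \<notin> B_cls n i" using inA[OF iN(1)] inB[OF iN(1)] 3 by auto
    ultimately show ?thesis using inD[OF iN(2)] 3 y by auto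
  next
    case 4
    have "fst (col x y) = i \<longleftrightarrow> dA y (x-n) = i - 1" using col_mix2[of y x] 4 i by auto
    moreover have "{x,y} \<notin> A_cls n i" "{x,y} \<notin> B_cls n i" using inA[OF iN(1)] inB[OF iN(1)] 4 by auto
    ultimately show ?thesis using inD[OF iN(2)] 4 x by auto
  qed
qed

lemma col0: assumes x: "x < 2*n" and y: "y < 2*n" and xy: "x \<noteq> y" and k: "h \<le> k" "k \<le> n - 1"
  shows "col x y = (0,k) \<longleftrightarrow> {x,y} \<in> D_cls n k"
proof -
  have kN: "k < n" using k n_ge3 by auto
  consider "x < n \<and> y < n" | "n \<le> x \<and> n \<le> y" | "x < n \<and> n \<le> y" | "y < n \<and> n \<le> x" by linarith
  then show ?thesis
  proof cases
    case 1
    have "fst (col x y) \<ge> 1" using col_top 1 ic_props[OF _ _ xy] by simp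
    thus ?thesis using inD[OF kN] 1 by auto
  next
    case 2
    have ab: "x - n < n" "y - n < n" "x - n \<noteq> y - n" using 2 x y xy by arith+
    have "fst (col x y) \<ge> 1" using col_bot 2 ic_props[OF ab] by simp
    thus ?thesis using inD[OF kN] 2 by auto
  next
    case 3
    have "col x y = (0,k) \<longleftrightarrow> dA x (y-n) = k" using col_mix1[of x y] 3 k by auto
    thus ?thesis using inD[OF kN] 3 y by auto
  next
    case 4
    have "col x y = (0,k) \<longleftrightarrow> dA y (x-n) = k" using col_mix2[of y x] 4 k by auto
    thus ?thesis using inD[OF kN] 4 x by auto
  qed
qed


definition MM :: "nat \<times> nat \<Rightarrow> nat set set" where "MM c = {{v, P c v} | v. v < 2*n}"

lemma TU: assumes i: "1 \<le> i" "i \<le> h"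
  shows "MM (i,1) \<union> MM (i,2) \<union> MM (i,3) = A_cls n i \<union> B_cls n i \<union> D_cls n (i - 1)"
proof
  show "MM (i,1) \<union> MM (i,2) \<union> MM (i,3) \<subseteq> A_cls n i \<union> B_cls n i \<union> D_cls n (i - 1)"
  proof
    fix e assume "e \<in> MM (i,1) \<union> MM (i,2) \<union> MM (i,3)"
    then obtain j v where jv: "j \<in> {1,2,3}" "v < 2*n" "e = {v, P (i,j) v}" unfolding MM_def by blast
    have c: "(i,j) \<in> CC" using jv i unfolding CC_def by auto
    have r: "P (i,j) v < 2*n" "P (i,j) v \<noteq> v" "col v (P (i,j) v) = (i,j)" using R1[OF c jv(2)] by auto
    have "fst (col v (P (i,j) v)) = i" using r by simp
    thus "e \<in> A_cls n i \<union> B_cls n i \<union> D_cls n (i - 1)" using colfst[OF jv(2) r(1) r(2)[symmetric] i] jv(3) by simp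
  qed
  show "A_cls n i \<union> B_cls n i \<union> D_cls n (i - 1) \<subseteq> MM (i,1) \<union> MM (i,2) \<union> MM (i,3)"
  proof
    fix e assume e: "e \<in> A_cls n i \<union> B_cls n i \<union> D_cls n (i - 1)"
    then obtain x y where xy: "e = {x,y}" "x < 2*n" "y < 2*n" "x \<noteq> y" using G_edge[OF i] by blast
    have f: "fst (col x y) = i" using colfst[OF xy(2,3,4) i] e xy(1) by simp
    have r: "col x y \<in> CC" "P (col x y) x = y" using R2[OF xy(2,3,4)] by auto
    obtain j where j: "col x y = (i,j)" using f by (metis prod.collapse)
    have jr: "j \<in> {1,2,3}" using r(1) j i unfolding CC_def by auto
    have "e \<in> MM (i,j)" unfolding MM_def using xy r(2) j by auto
    thus "e \<in> MM (i,1) \<union> MM (i,2) \<union> MM (i,3)" using jr by auto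
  qed
qed

lemma DM: assumes k: "h \<le> k" "k \<le> n - 1" shows "D_cls n k = MM (0,k)"
proof
  show "D_cls n k \<subseteq> MM (0,k)"
  proof
    fix e assume e: "e \<in> D_cls n k"
    then obtain x y where xy: "e = {x,y}" "x < 2*n" "y < 2*n" "x \<noteq> y" using D_edge by blast
    have c: "col x y = (0,k)" using col0[OF xy(2,3,4) k] e xy(1) by simp
    have "P (col x y) x = y" using R2[OF xy(2,3,4)] by auto
    thus "e \<in> MM (0,k)" unfolding MM_def using xy c by auto
  qed
  show "MM (0,k) \<subseteq> D_cls n k"
  proof
    fix e assume "e \<in> MM (0,k)"
    then obtain v where v: "v < 2*n" "e = {v, P (0,k) v}" unfolding MM_def by blast
    have c: "(0,k) \<in> CC" using k unfolding CC_def by auto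
    have r: "P (0,k) v < 2*n" "P (0,k) v \<noteq> v" "col v (P (0,k) v) = (0,k)" using R1[OF c v(1)] by auto
    thus "e \<in> D_cls n k" using col0[OF v(1) r(1) r(2)[symmetric] k] v(2) by simp
  qed
qed

lemma cardCC: "card CC = 2*n - 1" "finite CC"
proof -
  have d: "({1..h} \<times> {1,2,3::nat}) \<inter> ({0::nat} \<times> {h..n-1}) = {}" by auto
  have "card CC = card ({1..h} \<times> {1,2,3::nat}) + card ({0::nat} \<times> {h..n-1})"
    unfolding CC_def by (rule card_Un_disjoint) (auto simp: d)
  also have "\<dots> = h * 3 + (n - h)" using n_h by (simp add: card_cartesian_product)
  also have "\<dots> = 2*n - 1" using n_h by simp
  finally show "card CC = 2*n - 1" .
  show "finite CC" unfolding CC_def by auto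
qed

lemma fact: "one_factorization n (MM ` CC)"
  unfolding MM_def
  by (rule gen[of CC n col P]) (use cardCC col_sym R1 R2 n_ge3 in auto)

end

lemma n6: "n mod 6 = (5::nat) \<Longrightarrow> \<exists>m. n = 6*m+5 \<and> (n - 1) div 2 = 3*m+2 \<and> (2*n - 1) div 3 = 4*m+3"
proof -
  assume a: "n mod 6 = 5"
  define m where "m = n div 6"
  have "n = 6*(n div 6) + n mod 6" by simp
  hence m: "n = 6*m+5" using a unfolding m_def by linarith
  have "n - 1 = 2*(3*m+2)" using m by arith
  hence "(n - 1) div 2 = 3*m+2" by simp
  moreover have "2*n - 1 = 3*(4*m+3)" using m by arith
  hence "(2*n - 1) div 3 = 4*m+3" by simp
  ultimately show ?thesis using m by blast
qed

lemma arith5a: "n mod 6 = (5::nat) \<Longrightarrow> (n - 1) div 2 < i \<Longrightarrow> i \<le> (2*n - 1) div 3 \<Longrightarrow>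
  (n - 1) div 2 \<le> 3*i - n - 2 \<and> 3*i - n - 2 \<le> n - 1 \<and> (n - 1) div 2 \<le> 3*i - n - 1 \<and> 3*i - n - 1 \<le> n - 1 \<and>
  (n - 1) div 2 \<le> 3*i - n \<and> 3*i - n \<le> n - 1"
proof -
  assume a: "n mod 6 = 5" "(n - 1) div 2 < i" "i \<le> (2*n - 1) div 3"
  obtain m where m: "n = 6*m+5" "(n - 1) div 2 = 3*m+2" "(2*n - 1) div 3 = 4*m+3" using n6[OF a(1)] by blast
  have i: "3*m+2 < i" "i \<le> 4*m+3" using a(2,3) unfolding m(2,3) by auto
  have "3*i \<ge> n + 3" using i m(1) by linarith
  thus ?thesis unfolding m(2) using i m(1) by (intro conjI; linarith)
qed

lemma arith5b: "n mod 6 = (5::nat) \<Longrightarrow> (n - 1) div 2 \<le> k \<Longrightarrow> k \<le> n - 1 \<Longrightarrow>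
  (n - 1) div 2 < (k - (n - 1) div 2) div 3 + (n - 1) div 2 + 1 \<and>
  (k - (n - 1) div 2) div 3 + (n - 1) div 2 + 1 \<le> (2*n - 1) div 3 \<and>
  ((k - (n - 1) div 2) mod 3 = 0 \<longrightarrow> 3*((k - (n - 1) div 2) div 3 + (n - 1) div 2 + 1) - n - 2 = k) \<and>
  ((k - (n - 1) div 2) mod 3 = 1 \<longrightarrow> 3*((k - (n - 1) div 2) div 3 + (n - 1) div 2 + 1) - n - 1 = k) \<and>
  ((k - (n - 1) div 2) mod 3 = 2 \<longrightarrow> 3*((k - (n - 1) div 2) div 3 + (n - 1) div 2 + 1) - n = k)"
proof -
  assume a: "n mod 6 = 5" "(n - 1) div 2 \<le> k" "k \<le> n - 1"
  obtain m where m: "n = 6*m+5" "(n - 1) div 2 = 3*m+2" "(2*n - 1) div 3 = 4*m+3" using n6[OF a(1)] by blast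
  define d where "d = k - (3*m+2)"
  have d: "k = d + (3*m+2)" "d \<le> 3*m+2" using a(2,3) unfolding d_def m by auto
  have dm: "d = 3*(d div 3) + d mod 3" "d mod 3 < 3" by simp_all
  have "d div 3 \<le> m" using d(2) by linarith
  define q where "q = d div 3"
  define r where "r = d mod 3"
  have qr: "d = 3*q + r" "r < 3" "q \<le> m" using dm \<open>d div 3 \<le> m\<close> unfolding q_def r_def by auto
  have e: "3*(q + (3*m+2) + 1) = k + n + 2 - r" using qr d m(1) by simp
  show ?thesis unfolding m(2,3) d_def[symmetric] q_def[symmetric] r_def[symmetric] using e qr d by (intro conjI impI; linarith)
qed




context pf begin

lemma main:
  shows "\<exists>T :: nat \<Rightarrow> nat \<Rightarrow> nat set set.
    (n mod 6 = 5 \<longrightarrow>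
       one_factorization n {T i j | i j. 1 \<le> i \<and> i \<le> (2*n - 1) div 3 \<and> 1 \<le> j \<and> j \<le> 3}
     \<and> (\<forall>i. 1 \<le> i \<and> i \<le> (n - 1) div 2 \<longrightarrow>
          T i 1 \<union> T i 2 \<union> T i 3 = A_cls n i \<union> B_cls n i \<union> D_cls n (i - 1))
     \<and> (\<forall>i. (n + 1) div 2 \<le> i \<and> i \<le> (2*n - 1) div 3 \<longrightarrow>
          T i 1 = D_cls n (3*i - n - 2) \<and> T i 2 = D_cls n (3*i - n - 1) \<and> T i 3 = D_cls n (3*i - n)))
  \<and> (n mod 6 = 1 \<longrightarrow>
       one_factorization n
         ({T i j | i j. 1 \<le> i \<and> i \<le> (n - 1) div 2 \<and> 1 \<le> j \<and> j \<le> 3}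
          \<union> {D_cls n i | i. (n - 1) div 2 \<le> i \<and> i \<le> n - 1})
     \<and> (\<forall>i. 1 \<le> i \<and> i \<le> (n - 1) div 2 \<longrightarrow>
          T i 1 \<union> T i 2 \<union> T i 3 = A_cls n i \<union> B_cls n i \<union> D_cls n (i - 1)))"
proof -
  have hH: "h = (n - 1) div 2" by (rule h_def)
  define H where "H = (n - 1) div 2"
  define T where "T i j = (if i \<le> H then MM (i,j) else if j = 1 then D_cls n (3*i-n-2)
     else if j = 2 then D_cls n (3*i-n-1) else D_cls n (3*i-n))" for i j
  have F: "one_factorization n (MM ` CC)" by (rule fact)
  have U: "T i 1 \<union> T i 2 \<union> T i 3 = A_cls n i \<union> B_cls n i \<union> D_cls n (i - 1)"
    if "1 \<le> i" "i \<le> (n - 1) div 2" for i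
    using TU[of i] that hH unfolding T_def H_def by simp
  have S1: "{T i j | i j. 1 \<le> i \<and> i \<le> H \<and> 1 \<le> j \<and> j \<le> 3} = MM ` ({1..H} \<times> {1,2,3})"
  proof (rule set_eqI)
    fix e
    show "e \<in> {T i j | i j. 1 \<le> i \<and> i \<le> H \<and> 1 \<le> j \<and> j \<le> 3} \<longleftrightarrow> e \<in> MM ` ({1..H} \<times> {1,2,3})"
    proof
      assume "e \<in> {T i j | i j. 1 \<le> i \<and> i \<le> H \<and> 1 \<le> j \<and> j \<le> 3}"
      then obtain i j where ij: "e = T i j" "1 \<le> i" "i \<le> H" "1 \<le> j" "j \<le> 3" by blast
      hence "e = MM (i,j)" "(i,j) \<in> {1..H} \<times> {1,2,3}" unfolding T_def by auto
      thus "e \<in> MM ` ({1..H} \<times> {1,2,3})" by blast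
    next
      assume "e \<in> MM ` ({1..H} \<times> {1,2,3})"
      then obtain i j where ij: "e = MM (i,j)" "1 \<le> i" "i \<le> H" "j \<in> {1,2,3}" by auto
      hence "e = T i j" "1 \<le> j" "j \<le> 3" unfolding T_def by auto
      thus "e \<in> {T i j | i j. 1 \<le> i \<and> i \<le> H \<and> 1 \<le> j \<and> j \<le> 3}" using ij by blast
    qed
  qed
  have S2: "{D_cls n i | i. H \<le> i \<and> i \<le> n - 1} = MM ` ({0} \<times> {H..n-1})"
  proof (rule set_eqI)
    fix e
    show "e \<in> {D_cls n i | i. H \<le> i \<and> i \<le> n - 1} \<longleftrightarrow> e \<in> MM ` ({0} \<times> {H..n-1})"
    proof
      assume "e \<in> {D_cls n i | i. H \<le> i \<and> i \<le> n - 1}"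
      then obtain k where k: "e = D_cls n k" "H \<le> k" "k \<le> n - 1" by blast
      hence "e = MM (0,k)" using DM[of k] hH unfolding H_def by simp
      thus "e \<in> MM ` ({0} \<times> {H..n-1})" using k by auto
    next
      assume "e \<in> MM ` ({0} \<times> {H..n-1})"
      then obtain k where k: "e = MM (0,k)" "H \<le> k" "k \<le> n - 1" by auto
      hence "e = D_cls n k" using DM[of k] hH unfolding H_def by simp
      thus "e \<in> {D_cls n i | i. H \<le> i \<and> i \<le> n - 1}" using k by blast
    qed
  qed
  have CCe: "CC = ({1..H} \<times> {1,2,3}) \<union> ({0} \<times> {H..n-1})" unfolding CC_def hH H_def ..
  have case1: "one_factorization n
         ({T i j | i j. 1 \<le> i \<and> i \<le> (n - 1) div 2 \<and> 1 \<le> j \<and> j \<le> 3}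
          \<union> {D_cls n i | i. (n - 1) div 2 \<le> i \<and> i \<le> n - 1})"
  proof -
    have "({T i j | i j. 1 \<le> i \<and> i \<le> (n - 1) div 2 \<and> 1 \<le> j \<and> j \<le> 3}
          \<union> {D_cls n i | i. (n - 1) div 2 \<le> i \<and> i \<le> n - 1}) = MM ` CC"
      using S1 S2 unfolding CCe H_def by (simp add: image_Un)
    thus ?thesis using F by simp
  qed
  have case5: "one_factorization n {T i j | i j. 1 \<le> i \<and> i \<le> (2*n - 1) div 3 \<and> 1 \<le> j \<and> j \<le> 3}"
    if n5: "n mod 6 = 5"
  proof -
    have "{T i j | i j. 1 \<le> i \<and> i \<le> (2*n - 1) div 3 \<and> 1 \<le> j \<and> j \<le> 3} =
      {T i j | i j. 1 \<le> i \<and> i \<le> H \<and> 1 \<le> j \<and> j \<le> 3} \<union> {D_cls n i | i. H \<le> i \<and> i \<le> n - 1}"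
    proof (rule set_eqI)
      fix e
      show "e \<in> {T i j | i j. 1 \<le> i \<and> i \<le> (2*n - 1) div 3 \<and> 1 \<le> j \<and> j \<le> 3} \<longleftrightarrow>
        e \<in> {T i j | i j. 1 \<le> i \<and> i \<le> H \<and> 1 \<le> j \<and> j \<le> 3} \<union> {D_cls n i | i. H \<le> i \<and> i \<le> n - 1}"
      proof
        assume "e \<in> {T i j | i j. 1 \<le> i \<and> i \<le> (2*n - 1) div 3 \<and> 1 \<le> j \<and> j \<le> 3}"
        then obtain i j where ij: "e = T i j" "1 \<le> i" "i \<le> (2*n - 1) div 3" "1 \<le> j" "j \<le> 3" by blast
        show "e \<in> {T i j | i j. 1 \<le> i \<and> i \<le> H \<and> 1 \<le> j \<and> j \<le> 3} \<union> {D_cls n i | i. H \<le> i \<and> i \<le> n - 1}"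
        proof (cases "i \<le> H")
          case True thus ?thesis using ij by blast
        next
          case False
          have a: "H \<le> 3*i - n - 2 \<and> 3*i - n - 2 \<le> n - 1 \<and> H \<le> 3*i - n - 1 \<and> 3*i - n - 1 \<le> n - 1 \<and>
             H \<le> 3*i - n \<and> 3*i - n \<le> n - 1"
          proof -
            have "(n - 1) div 2 < i" using False unfolding H_def by simp
            from arith5a[OF n5 this ij(3)] show ?thesis unfolding H_def .
          qed
          have "j = 1 \<or> j = 2 \<or> j = 3" using ij by auto
          hence "\<exists>k. e = D_cls n k \<and> H \<le> k \<and> k \<le> n - 1" using a False ij(1) unfolding T_def by auto
          thus ?thesis by blast
        qed
      next
        assume "e \<in> {T i j | i j. 1 \<le> i \<and> i \<le> H \<and> 1 \<le> j \<and> j \<le> 3} \<union> {D_cls n i | i. H \<le> i \<and> i \<le> n - 1}"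
        thus "e \<in> {T i j | i j. 1 \<le> i \<and> i \<le> (2*n - 1) div 3 \<and> 1 \<le> j \<and> j \<le> 3}"
        proof
          assume "e \<in> {T i j | i j. 1 \<le> i \<and> i \<le> H \<and> 1 \<le> j \<and> j \<le> 3}"
          then obtain i j where ij: "e = T i j" "1 \<le> i" "i \<le> H" "1 \<le> j" "j \<le> 3" by blast
          have "H \<le> (2*n - 1) div 3" unfolding H_def by simp
          thus ?thesis using ij by fastforce
        next
          assume "e \<in> {D_cls n i | i. H \<le> i \<and> i \<le> n - 1}"
          then obtain k where k: "e = D_cls n k" "H \<le> k" "k \<le> n - 1" by blast
          define i where "i = (k - H) div 3 + H + 1"
          define j where "j = (k - H) mod 3 + 1"
          have big: "H < i \<and> i \<le> (2*n - 1) div 3 \<and> ((k - H) mod 3 = 0 \<longrightarrow> 3*i - n - 2 = k) \<and>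
             ((k - H) mod 3 = 1 \<longrightarrow> 3*i - n - 1 = k) \<and> ((k - H) mod 3 = 2 \<longrightarrow> 3*i - n = k)"
            using arith5b[OF n5 k(2)[unfolded H_def] k(3)] unfolding i_def H_def .
          have a: "H < i" "i \<le> (2*n - 1) div 3" "(j = 1 \<longrightarrow> 3*i - n - 2 = k)" "(j = 2 \<longrightarrow> 3*i - n - 1 = k)"
            "(j = 3 \<longrightarrow> 3*i - n = k)"
            using big unfolding j_def by auto
          have jr: "1 \<le> j" "j \<le> 3" unfolding j_def by auto
          have "j = 1 \<or> j = 2 \<or> j = 3" using jr by auto
          hence "T i j = D_cls n k" using a unfolding T_def by auto
          moreover have "1 \<le> i" using a by simp
          ultimately show ?thesis using k(1) a(2) jr by blast
        qed
      qed
    qed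
    thus ?thesis using case1 unfolding H_def by simp
  qed
  have D5: "T i 1 = D_cls n (3*i - n - 2) \<and> T i 2 = D_cls n (3*i - n - 1) \<and> T i 3 = D_cls n (3*i - n)"
    if "(n + 1) div 2 \<le> i" for i
  proof -
    have "n = 2*h + 1" by (rule n_h)
    hence "(n + 1) div 2 = h + 1" by simp
    hence "\<not> i \<le> H" using that hH unfolding H_def by simp
    thus ?thesis unfolding T_def by simp
  qed
  show ?thesis
    apply (rule exI[of _ T])
    apply (intro conjI impI)
        apply (rule case5, assumption)
       apply (use U in blast)
      apply (use D5 in blast)
     apply (rule case1)
    apply (use U in blast)
    done
qed


end

theorem lemma5:
  fixes n :: nat
  assumes "prime n" and "n mod 6 = 1 \<or> n mod 6 = 5"
  shows "\<exists>T :: nat \<Rightarrow> nat \<Rightarrow> nat set set.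
    (n mod 6 = 5 \<longrightarrow>
       one_factorization n {T i j | i j. 1 \<le> i \<and> i \<le> (2*n - 1) div 3 \<and> 1 \<le> j \<and> j \<le> 3}
     \<and> (\<forall>i. 1 \<le> i \<and> i \<le> (n - 1) div 2 \<longrightarrow>
          T i 1 \<union> T i 2 \<union> T i 3 = A_cls n i \<union> B_cls n i \<union> D_cls n (i - 1))
     \<and> (\<forall>i. (n + 1) div 2 \<le> i \<and> i \<le> (2*n - 1) div 3 \<longrightarrow>
          T i 1 = D_cls n (3*i - n - 2) \<and> T i 2 = D_cls n (3*i - n - 1) \<and> T i 3 = D_cls n (3*i - n)))
  \<and> (n mod 6 = 1 \<longrightarrow>
       one_factorization n
         ({T i j | i j. 1 \<le> i \<and> i \<le> (n - 1) div 2 \<and> 1 \<le> j \<and> j \<le> 3}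
          \<union> {D_cls n i | i. (n - 1) div 2 \<le> i \<and> i \<le> n - 1})
     \<and> (\<forall>i. 1 \<le> i \<and> i \<le> (n - 1) div 2 \<longrightarrow>
          T i 1 \<union> T i 2 \<union> T i 3 = A_cls n i \<union> B_cls n i \<union> D_cls n (i - 1)))"
proof -
  have "odd n" using assms(2) by presburger
  hence "pf n" using assms(1) by (simp add: pf_def)
  thus ?thesis by (rule pf.main)
qed


end
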